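(* Let $(A,* )$ be an involutive associative algebra, $(M,* )$ an involutive $A$-bimodule, and $T:M\to A$ a relative Rota-Baxter operator on $A$ with respect to $M$. Then $H^\bullet_T(M,A)\cong iH^\bullet_T(M,A)\oplus i_-H^\bullet_T(M,A)$, where these are the cohomologies of the complexes $(\mathrm{Hom}(M^{\otimes\bullet},A),d_T)$, $(i\mathrm{Hom}(M^{\otimes\bullet},A),d_T)$ and $(i_-\mathrm{Hom}(M^{\otimes\bullet},A),d_T)$ respectively.
   Context: An involutive associative algebra is an associative algebra $A$ with a linear map $*:A\to A$ satisfying $a^{**}=a$ and $(ab)^*=b^*a^*$; an involutive $A$-bimodule is an $A$-bimodule $M$ with $*:M\to M$, $u^{**}=u$, $(au)^*=u^*a^*$, $(ua)^*=a^*u^*$. A relative Rota-Baxter operator is a linear $T:M\to A$ with $T(u^* )=T(u)^*$ and $T(u)T(v)=T(uT(v)+T(u)v)$. Put $u\circledast v=uT(v)+T(u)v$, $l_T(u,a)=T(u)a-T(ua)$, $r_T(a,u)=aT(u)-T(au)$. Let $\mathrm{Hom}(M^{\otimes 0},A)=A$. The differential $d_T:\mathrm{Hom}(M^{\otimes n},A)\to \mathrm{Hom}(M^{\otimes n+1},A)$ is $d_T(a)(u)=l_T(u,a)-r_T(a,u)$ for $a\in A$, and for $n\ge1$, $(d_Tf)(u_1,\ldots,u_{n+1})=(-1)^n\big[l_T(u_1,f(u_2,\ldots,u_{n+1}))+\sum_{i=1}^n(-1)^if(u_1,\ldots,u_i\circledast u_{i+1},\ldots,u_{n+1})+(-1)^{n+1}r_T(f(u_1,\ldots,u_n),u_{n+1})\big]$;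 $H^\bullet_T(M,A)$ is its cohomology. Define $S_0(a)=-a^*$ and $(S_nf)(u_1,\ldots,u_n)=(-1)^{\frac{(n-1)(n-2)}{2}}f(u_n^*,\ldots,u_1^* )^*$ for $n\ge1$; then $S_n^2=\mathrm{id}$. Let $i\mathrm{Hom}(M^{\otimes n},A)$ and $i_-\mathrm{Hom}(M^{\otimes n},A)$ be the $+1$ and $-1$ eigenspaces of $S_n$ (so $i\mathrm{Hom}(M^{\otimes 0},A)=\{a\mid a^*=-a\}$). Both are subcomplexes for $d_T$; their cohomologies are $iH^\bullet_T(M,A)$ and $i_-H^\bullet_T(M,A)$. *)

theory Defs
  imports Main "HOL.Vector_Spaces"
begin

text \<open>The algebra A is a type 'a of class ring
 (associative, not necessarily unital) with a k-vector space structure sA making the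
 product bilinear.\<close>

definition inv_assoc_algebra ::
  "('k::field \<Rightarrow> 'a::ring \<Rightarrow> 'a) \<Rightarrow> ('a \<Rightarrow> 'a) \<Rightarrow> bool" where
  "inv_assoc_algebra sA starA \<longleftrightarrow>
     vector_space sA \<and>
     (\<forall>c x y. sA c (x * y) = sA c x * y \<and> sA c (x * y) = x * sA c y) \<and>
     Vector_Spaces.linear sA sA starA \<and>
     (\<forall>x. starA (starA x) = x) \<and>
     (\<forall>x y. starA (x * y) = starA y * starA x)"

definition inv_bimodule ::
  "('k::field \<Rightarrow> 'a::ring \<Rightarrow> 'a) \<Rightarrow> ('k \<Rightarrow> 'm::ab_group_add \<Rightarrow> 'm) \<Rightarrow>
   ('a \<Rightarrow> 'm \<Rightarrow> 'm) \<Rightarrow> ('m \<Rightarrow> 'a \<Rightarrow> 'm) \<Rightarrow> ('a \<Rightarrow> 'a) \<Rightarrow> ('m \<Rightarrow> 'm) \<Rightarrow> bool" where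
  "inv_bimodule sA sM la ra starA starM \<longleftrightarrow>
     vector_space sM \<and>
     (\<forall>a b u. la (a + b) u = la a u + la b u) \<and>
     (\<forall>a u v. la a (u + v) = la a u + la a v) \<and>
     (\<forall>c a u. la (sA c a) u = sM c (la a u) \<and> la a (sM c u) = sM c (la a u)) \<and>
     (\<forall>a b u. ra u (a + b) = ra u a + ra u b) \<and>
     (\<forall>a u v. ra (u + v) a = ra u a + ra v a) \<and>
     (\<forall>c a u. ra u (sA c a) = sM c (ra u a) \<and> ra (sM c u) a = sM c (ra u a)) \<and>
     (\<forall>a b u. la (a * b) u = la a (la b u)) \<and>
     (\<forall>a b u. ra u (a * b) = ra (ra u a) b) \<and>
     (\<forall>a b u. la a (ra u b) = ra (la a u) b) \<and>
     Vector_Spaces.linear sM sM starM \<and>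
     (\<forall>u. starM (starM u) = u) \<and>
     (\<forall>a u. starM (la a u) = ra (starM u) (starA a)) \<and>
     (\<forall>a u. starM (ra u a) = la (starA a) (starM u))"

definition rel_RB ::
  "('k::field \<Rightarrow> 'a::ring \<Rightarrow> 'a) \<Rightarrow> ('k \<Rightarrow> 'm::ab_group_add \<Rightarrow> 'm) \<Rightarrow>
   ('a \<Rightarrow> 'm \<Rightarrow> 'm) \<Rightarrow> ('m \<Rightarrow> 'a \<Rightarrow> 'm) \<Rightarrow> ('a \<Rightarrow> 'a) \<Rightarrow> ('m \<Rightarrow> 'm) \<Rightarrow>
   ('m \<Rightarrow> 'a) \<Rightarrow> bool" where
  "rel_RB sA sM la ra starA starM T \<longleftrightarrow>
     Vector_Spaces.linear sM sA T \<and>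
     (\<forall>u. T (starM u) = starA (T u)) \<and>
     (\<forall>u v. T u * T v = T (ra u (T v) + la (T u) v))"

text \<open>An n-cochain in Hom(M^{\<otimes>n},A) is represented as a function on lists of elements
 of M which is k-multilinear on lists of length n and zero on lists of other lengths.
 For n = 0 this is a function determined by its value on [], i.e. an element of A.\<close>

definition multilin ::
  "('k::field \<Rightarrow> 'a::ring \<Rightarrow> 'a) \<Rightarrow> ('k \<Rightarrow> 'm::ab_group_add \<Rightarrow> 'm) \<Rightarrow> nat \<Rightarrow> ('m list \<Rightarrow> 'a) \<Rightarrow> bool" where
  "multilin sA sM n f \<longleftrightarrow>
     (\<forall>us. length us \<noteq> n \<longrightarrow> f us = 0) \<and>
     (\<forall>us i u v c. length us = n \<and> i < n \<longrightarrow>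
        f (us[i := u + v]) = f (us[i := u]) + f (us[i := v]) \<and>
        f (us[i := sM c u]) = sA c (f (us[i := u])))"

definition cochains where
  "cochains sA sM n = {f. multilin sA sM n f}"

definition sgn_if :: "nat \<Rightarrow> 'a::ring \<Rightarrow> 'a" where
  "sgn_if k x = (if even k then x else - x)"

definition circT :: "('a::ring \<Rightarrow> 'm \<Rightarrow> 'm::ab_group_add) \<Rightarrow> ('m \<Rightarrow> 'a \<Rightarrow> 'm) \<Rightarrow> ('m \<Rightarrow> 'a) \<Rightarrow> 'm \<Rightarrow> 'm \<Rightarrow> 'm" where
  "circT la ra T u v = ra u (T v) + la (T u) v"

definition lT where "lT ra T u a = T u * a - T (ra u a)"
definition rT where "rT la T a u = a * T u - T (la a u)"

text \<open>merge i us (1 \<le> i \<le> n) replaces u_i, u_{i+1} by u_i \<circledast> u_{i+1} (1-based).\<close>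
definition merge_at where
  "merge_at la ra T i us = take (i - 1) us @ [circT la ra T (us ! (i - 1)) (us ! i)] @ drop (i + 1) us"

definition dT ::
  "('a::ring \<Rightarrow> 'm \<Rightarrow> 'm::ab_group_add) \<Rightarrow> ('m \<Rightarrow> 'a \<Rightarrow> 'm) \<Rightarrow> ('m \<Rightarrow> 'a) \<Rightarrow> nat \<Rightarrow>
   ('m list \<Rightarrow> 'a) \<Rightarrow> ('m list \<Rightarrow> 'a)" where
  "dT la ra T n f = (\<lambda>us.
     if length us \<noteq> n + 1 then 0
     else if n = 0 then lT ra T (us ! 0) (f []) - rT la T (f []) (us ! 0)
     else sgn_if n
       (lT ra T (us ! 0) (f (tl us))
        + (\<Sum>i = 1..n. sgn_if i (f (merge_at la ra T i us)))
        + sgn_if (n + 1) (rT la T (f (take n us)) (us ! n))))"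

definition S_op :: "('a \<Rightarrow> 'a::ring) \<Rightarrow> ('m \<Rightarrow> 'm) \<Rightarrow> nat \<Rightarrow> ('m list \<Rightarrow> 'a) \<Rightarrow> ('m list \<Rightarrow> 'a)" where
  "S_op starA starM n f = (\<lambda>us.
     if length us \<noteq> n then 0
     else if n = 0 then - starA (f [])
     else sgn_if (((n - 1) * (n - 2)) div 2) (starA (f (rev (map starM us)))))"

definition icochains where
  "icochains sA sM starA starM n = {f \<in> cochains sA sM n. S_op starA starM n f = f}"

definition imcochains where
  "imcochains sA sM starA starM n = {f \<in> cochains sA sM n. S_op starA starM n f = (\<lambda>us. - f us)}"

definition cocycles where
  "cocycles la ra T C n = {f \<in> C n. dT la ra T n f = (\<lambda>_. 0)}"

definition coboundaries where
  "coboundaries la ra T C n = (if n = 0 then {\<lambda>_. 0} else dT la ra T (n - 1) ` C (n - 1))"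

definition fadd :: "('m list \<Rightarrow> 'a::ring) \<Rightarrow> ('m list \<Rightarrow> 'a) \<Rightarrow> 'm list \<Rightarrow> 'a" where
  "fadd f g = (\<lambda>us. f us + g us)"

definition fscale where
  "fscale sA c f = (\<lambda>us. sA c (f us))"

definition coset where
  "coset B f = {fadd f b | b. b \<in> B}"

definition quot where
  "quot Z B = coset B ` Z"

definition qadd where
  "qadd X Y = {fadd x y | x y. x \<in> X \<and> y \<in> Y}"

definition qscale where
  "qscale sA B c X = {fadd (fscale sA c x) b | x b. x \<in> X \<and> b \<in> B}"

definition quot_iso_sum where
  "quot_iso_sum sA Z B Z1 B1 Z2 B2 \<longleftrightarrow>
     (\<exists>\<Psi>. bij_betw \<Psi> (quot Z1 B1 \<times> quot Z2 B2) (quot Z B) \<and>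
       (\<forall>X\<in>quot Z1 B1. \<forall>Y\<in>quot Z2 B2. \<forall>X'\<in>quot Z1 B1. \<forall>Y'\<in>quot Z2 B2.
          \<Psi> (qadd X X', qadd Y Y') = qadd (\<Psi> (X, Y)) (\<Psi> (X', Y'))) \<and>
       (\<forall>X\<in>quot Z1 B1. \<forall>Y\<in>quot Z2 B2. \<forall>c.
          \<Psi> (qscale sA B1 c X, qscale sA B2 c Y) = qscale sA B c (\<Psi> (X, Y))))"

end

theory Submission
  imports Defs
begin


lemma fadd_swap: "fadd (fadd a b) (fadd c d) = fadd (fadd a c) (fadd b d)"
  by (rule ext) (simp add: fadd_def algebra_simps)

lemma fadd_assoc: "fadd (fadd a b) c = fadd a (fadd b c)"
  by (rule ext) (simp add: fadd_def algebra_simps)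

lemma fadd_zero: "fadd a (\<lambda>_. 0) = a"
  by (rule ext) (simp add: fadd_def)

lemma coset_shift:
  assumes g1: "\<forall>x\<in>BB. \<forall>y\<in>BB. fadd x y \<in> BB" and g2: "\<forall>x\<in>BB. (\<lambda>us. - x us) \<in> BB"
    and b: "b \<in> BB"
  shows "coset BB (fadd z b) = coset BB z"
proof
  show "coset BB (fadd z b) \<subseteq> coset BB z"
  proof
    fix x assume "x \<in> coset BB (fadd z b)"
    then obtain c where c: "c \<in> BB" "x = fadd (fadd z b) c" unfolding coset_def by blast
    then have "x = fadd z (fadd b c)" by (simp add: fadd_assoc)
    moreover have "fadd b c \<in> BB" using g1 b c by blast
    ultimately show "x \<in> coset BB z" unfolding coset_def by blast
  qed
next
  show "coset BB z \<subseteq> coset BB (fadd z b)"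
  proof
    fix x assume "x \<in> coset BB z"
    then obtain c where c: "c \<in> BB" "x = fadd z c" unfolding coset_def by blast
    have nb: "(\<lambda>us. - b us) \<in> BB" using g2 b by blast
    have "x = fadd (fadd z b) (fadd (\<lambda>us. - b us) c)" using c(2)
      by (auto simp: fadd_def)
    moreover have "fadd (\<lambda>us. - b us) c \<in> BB" using g1 nb c by blast
    ultimately show "x \<in> coset BB (fadd z b)" unfolding coset_def by blast
  qed
qed

lemma quot_abs:
  fixes sA :: "'k::field \<Rightarrow> 'a::ring \<Rightarrow> 'a" and Z B Z1 B1 Z2 B2 :: "('m list \<Rightarrow> 'a) set"
  assumes vs: "vector_space sA"
  and g10: "(\<lambda>_. 0) \<in> B1" and g20: "(\<lambda>_. 0) \<in> B2"
  and g11: "\<forall>x\<in>B1. \<forall>y\<in>B1. fadd x y \<in> B1" and g12: "\<forall>x\<in>B1. (\<lambda>us. - x us) \<in> B1"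
  and g21: "\<forall>x\<in>B2. \<forall>y\<in>B2. fadd x y \<in> B2" and g22: "\<forall>x\<in>B2. (\<lambda>us. - x us) \<in> B2"
  and H2: "\<And>b. b \<in> B \<longleftrightarrow> (\<exists>b1\<in>B1. \<exists>b2\<in>B2. b = fadd b1 b2)"
  and H3: "\<And>z1 z2. z1 \<in> Z1 \<Longrightarrow> z2 \<in> Z2 \<Longrightarrow> fadd z1 z2 \<in> Z"
  and H4: "\<And>z. z \<in> Z \<Longrightarrow> \<exists>z1\<in>Z1. \<exists>z2\<in>Z2. z = fadd z1 z2"
  and H5: "\<And>z1 z1' z2 z2' b1 b2. z1\<in>Z1 \<Longrightarrow> z1'\<in>Z1 \<Longrightarrow> z2\<in>Z2 \<Longrightarrow> z2'\<in>Z2 \<Longrightarrow> b1\<in>B1 \<Longrightarrow> b2\<in>B2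
      \<Longrightarrow> fadd z1 z2 = fadd (fadd z1' z2') (fadd b1 b2) \<Longrightarrow> z1 = fadd z1' b1 \<and> z2 = fadd z2' b2"
  shows "quot_iso_sum sA Z B Z1 B1 Z2 B2"
proof -
  have ms: "module sA" using vs module_iff_vector_space by blast
  have qc: "qadd (coset B1 z1) (coset B2 z2) = coset B (fadd z1 z2)" for z1 z2
  proof
    show "qadd (coset B1 z1) (coset B2 z2) \<subseteq> coset B (fadd z1 z2)"
    proof
      fix x assume "x \<in> qadd (coset B1 z1) (coset B2 z2)"
      then obtain b1 b2 where "b1 \<in> B1" "b2 \<in> B2" "x = fadd (fadd z1 b1) (fadd z2 b2)"
        unfolding qadd_def coset_def by blast
      moreover have "fadd b1 b2 \<in> B" using H2 \<open>b1 \<in> B1\<close> \<open>b2 \<in> B2\<close> by blast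
      ultimately have "x = fadd (fadd z1 z2) (fadd b1 b2) \<and> fadd b1 b2 \<in> B" by (simp add: fadd_swap[of z1 b1 z2 b2])
      then show "x \<in> coset B (fadd z1 z2)" unfolding coset_def by blast
    qed
  next
    show "coset B (fadd z1 z2) \<subseteq> qadd (coset B1 z1) (coset B2 z2)"
    proof
      fix x assume "x \<in> coset B (fadd z1 z2)"
      then obtain b where "b \<in> B" "x = fadd (fadd z1 z2) b" unfolding coset_def by blast
      then obtain b1 b2 where bb: "b1 \<in> B1" "b2 \<in> B2" "b = fadd b1 b2" using H2 by blast
      have "x = fadd (fadd z1 b1) (fadd z2 b2)" using bb \<open>x = _\<close> by (simp add: fadd_swap[of z1 z2 b1 b2])
      then show "x \<in> qadd (coset B1 z1) (coset B2 z2)" unfolding qadd_def coset_def using bb by blast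
    qed
  qed
  define \<Psi> where "\<Psi> = (\<lambda>(X::('m list \<Rightarrow> 'a) set, Y::('m list \<Rightarrow> 'a) set). qadd X Y)"
  have inj: "inj_on \<Psi> (quot Z1 B1 \<times> quot Z2 B2)"
  proof (rule inj_onI)
    fix p q assume p: "p \<in> quot Z1 B1 \<times> quot Z2 B2" and q: "q \<in> quot Z1 B1 \<times> quot Z2 B2"
      and e: "\<Psi> p = \<Psi> q"
    obtain z1 z2 where z: "z1 \<in> Z1" "z2 \<in> Z2" "p = (coset B1 z1, coset B2 z2)"
      using p unfolding quot_def by blast
    obtain z1' z2' where z': "z1' \<in> Z1" "z2' \<in> Z2" "q = (coset B1 z1', coset B2 z2')"
      using q unfolding quot_def by blast
    have "coset B (fadd z1 z2) = coset B (fadd z1' z2')" using e z z' qc unfolding \<Psi>_def by simp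
    moreover have "fadd z1 z2 \<in> coset B (fadd z1 z2)"
    proof -
      have "fadd (\<lambda>_. 0) (\<lambda>_. 0) \<in> B" using H2 g10 g20 by blast
      then have "(\<lambda>_. 0) \<in> B" by (simp add: fadd_zero)
      then show ?thesis unfolding coset_def using fadd_zero by (metis (mono_tags, lifting) mem_Collect_eq)
    qed
    ultimately obtain b where b: "b \<in> B" "fadd z1 z2 = fadd (fadd z1' z2') b"
      unfolding coset_def by blast
    then obtain b1 b2 where bb: "b1 \<in> B1" "b2 \<in> B2" "b = fadd b1 b2" using H2 by blast
    then have "z1 = fadd z1' b1 \<and> z2 = fadd z2' b2" using H5 z z' b by blast
    then show "p = q" using z z' bb coset_shift[OF g11 g12] coset_shift[OF g21 g22] by simp
  qed
  have img: "\<Psi> ` (quot Z1 B1 \<times> quot Z2 B2) = quot Z B"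
  proof
    show "\<Psi> ` (quot Z1 B1 \<times> quot Z2 B2) \<subseteq> quot Z B"
      unfolding quot_def \<Psi>_def using qc H3 by auto
  next
    show "quot Z B \<subseteq> \<Psi> ` (quot Z1 B1 \<times> quot Z2 B2)"
    proof
      fix X assume "X \<in> quot Z B"
      then obtain z where "z \<in> Z" "X = coset B z" unfolding quot_def by blast
      then obtain z1 z2 where "z1 \<in> Z1" "z2 \<in> Z2" "X = coset B (fadd z1 z2)" using H4 by blast
      then have "X = \<Psi> (coset B1 z1, coset B2 z2)" using qc unfolding \<Psi>_def by simp
      then show "X \<in> \<Psi> ` (quot Z1 B1 \<times> quot Z2 B2)"
        using \<open>z1 \<in> Z1\<close> \<open>z2 \<in> Z2\<close> unfolding quot_def by blast
    qed
  qed
  have add: "\<Psi> (qadd X X', qadd Y Y') = qadd (\<Psi> (X, Y)) (\<Psi> (X', Y'))" for X X' Y Y'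
  proof -
    have "qadd (qadd X X') (qadd Y Y') = qadd (qadd X Y) (qadd X' Y')"
      unfolding qadd_def
    proof (intro set_eqI iffI)
      fix u assume "u \<in> {fadd x y |x y. x \<in> {fadd x y |x y. x \<in> X \<and> y \<in> X'} \<and> y \<in> {fadd x y |x y. x \<in> Y \<and> y \<in> Y'}}"
      then obtain a b c d where h: "a \<in> X" "b \<in> X'" "c \<in> Y" "d \<in> Y'" "u = fadd (fadd a b) (fadd c d)" by blast
      then have "u = fadd (fadd a c) (fadd b d)" by (simp add: fadd_swap[of a b c d])
      then show "u \<in> {fadd x y |x y. x \<in> {fadd x y |x y. x \<in> X \<and> y \<in> Y} \<and> y \<in> {fadd x y |x y. x \<in> X' \<and> y \<in> Y'}}"
        using h by blast
    next
      fix u assume "u \<in> {fadd x y |x y. x \<in> {fadd x y |x y. x \<in> X \<and> y \<in> Y} \<and> y \<in> {fadd x y |x y. x \<in> X' \<and> y \<in> Y'}}"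
      then obtain a b c d where h: "a \<in> X" "b \<in> Y" "c \<in> X'" "d \<in> Y'" "u = fadd (fadd a b) (fadd c d)" by blast
      then have "u = fadd (fadd a c) (fadd b d)" by (simp add: fadd_swap[of a b c d])
      then show "u \<in> {fadd x y |x y. x \<in> {fadd x y |x y. x \<in> X \<and> y \<in> X'} \<and> y \<in> {fadd x y |x y. x \<in> Y \<and> y \<in> Y'}}"
        using h by blast
    qed
    then show ?thesis unfolding \<Psi>_def by simp
  qed
  have sc: "\<Psi> (qscale sA B1 c X, qscale sA B2 c Y) = qscale sA B c (\<Psi> (X, Y))" for c X Y
  proof -
    have dist: "fadd (fadd (fscale sA c x) b1) (fadd (fscale sA c y) b2) = fadd (fscale sA c (fadd x y)) (fadd b1 b2)" for x y b1 b2
      by (rule ext) (simp add: fadd_def fscale_def module.scale_right_distrib[OF ms] algebra_simps)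
    have "qadd (qscale sA B1 c X) (qscale sA B2 c Y) = qscale sA B c (qadd X Y)"
      unfolding qadd_def qscale_def
    proof (intro set_eqI iffI)
      fix u assume "u \<in> {fadd x y |x y. x \<in> {fadd (fscale sA c x) b |x b. x \<in> X \<and> b \<in> B1} \<and> y \<in> {fadd (fscale sA c x) b |x b. x \<in> Y \<and> b \<in> B2}}"
      then obtain x y b1 b2 where h: "x \<in> X" "y \<in> Y" "b1 \<in> B1" "b2 \<in> B2" "u = fadd (fadd (fscale sA c x) b1) (fadd (fscale sA c y) b2)" by blast
      then have "u = fadd (fscale sA c (fadd x y)) (fadd b1 b2)" using dist by simp
      moreover have "fadd b1 b2 \<in> B" using H2 h by blast
      ultimately show "u \<in> {fadd (fscale sA c x) b |x b. x \<in> {fadd x y |x y. x \<in> X \<and> y \<in> Y} \<and> b \<in> B}"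
        using h by blast
    next
      fix u assume "u \<in> {fadd (fscale sA c x) b |x b. x \<in> {fadd x y |x y. x \<in> X \<and> y \<in> Y} \<and> b \<in> B}"
      then obtain x y b where "x \<in> X" "y \<in> Y" "b \<in> B" "u = fadd (fscale sA c (fadd x y)) b" by blast
      then obtain b1 b2 where bb: "b1 \<in> B1" "b2 \<in> B2" "b = fadd b1 b2" using H2 by blast
      have "u = fadd (fadd (fscale sA c x) b1) (fadd (fscale sA c y) b2)"
        using bb \<open>u = _\<close> dist[symmetric] by simp
      then show "u \<in> {fadd x y |x y. x \<in> {fadd (fscale sA c x) b |x b. x \<in> X \<and> b \<in> B1} \<and> y \<in> {fadd (fscale sA c x) b |x b. x \<in> Y \<and> b \<in> B2}}"
        using \<open>x \<in> X\<close> \<open>y \<in> Y\<close> bb by blast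
    qed
    then show ?thesis unfolding \<Psi>_def by simp
  qed
  have bij: "bij_betw \<Psi> (quot Z1 B1 \<times> quot Z2 B2) (quot Z B)"
    unfolding bij_betw_def using inj img by (rule conjI)
  show ?thesis unfolding quot_iso_sum_def
    apply (rule exI[of _ \<Psi>])
    apply (intro conjI bij ballI allI)
     apply (rule add)
    apply (rule sc)
    done
qed



lemma sgn_if_add: "sgn_if k (x + y) = sgn_if k x + sgn_if k (y::'a::ring)"
  by (simp add: sgn_if_def)
lemma sgn_if_sgn_if: "sgn_if j (sgn_if k (x::'a::ring)) = sgn_if (j + k) x"
  by (simp add: sgn_if_def)
lemma sgn_if_double: "sgn_if (k + k) (x::'a::ring) = x"
  by (simp add: sgn_if_def)
lemma sgn_if_sum: "sgn_if k (sum g A) = (\<Sum>i\<in>A. sgn_if k (g i :: 'a::ring))"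
  by (simp add: sgn_if_def sum_negf)
lemma sgn_if_fun:
  assumes "\<And>x y. f (x + y) = f x + f y"
  shows "f (sgn_if k x) = sgn_if k (f x :: 'b::ring)"
proof -
  interpret additive f by (rule additive.intro) (rule assms)
  show ?thesis by (simp add: sgn_if_def minus)
qed

lemma merge_rev:
  assumes len: "length us = Suc n" and i: "1 \<le> i" "i \<le> n"
    and cconj: "\<And>u v. starM (circT la ra T u v) = circT la ra T (starM v) (starM u)"
  shows "merge_at la ra T i (rev (map starM us)) = rev (map starM (merge_at la ra T (Suc n - i) us))"
proof -
  let ?vs = "rev (map starM us)"
  have t: "take (i - 1) ?vs = rev (map starM (drop (Suc n - i + 1) us))"
    using len i by (simp add: take_rev drop_map Suc_diff_le)
  have d: "drop (i + 1) ?vs = rev (map starM (take (Suc n - i - 1) us))"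
    using len i by (simp add: drop_rev take_map)
  have n1: "?vs ! (i - 1) = starM (us ! (Suc n - i))"
    using len i by (simp add: rev_nth Suc_diff_le)
  have n2: "?vs ! i = starM (us ! (Suc n - i - 1))"
    using len i by (simp add: rev_nth)
  show ?thesis
    unfolding merge_at_def using t d n1 n2 cconj by simp
qed

lemma compat:
  fixes starA :: "'a::ring \<Rightarrow> 'a" and starM :: "'m::ab_group_add \<Rightarrow> 'm"
  assumes sA_add: "\<And>x y. starA (x + y) = starA x + starA y"
    and sM_inv: "\<And>u. starM (starM u) = u"
    and lconj: "\<And>u a. starA (lT ra T u a) = rT la T (starA a) (starM u)"
    and rconj: "\<And>u a. starA (rT la T a u) = lT ra T (starM u) (starA a)"
    and cconj: "\<And>u v. starM (circT la ra T u v) = circT la ra T (starM v) (starM u)"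
    and lT_add: "\<And>u a b. lT ra T u (a + b) = lT ra T u a + lT ra T u b"
    and rT_add: "\<And>u a b. rT la T (a + b) u = rT la T a u + rT la T b u"
  shows "S_op starA starM (Suc n) (dT la ra T n f) = dT la ra T n (S_op starA starM n f)"
proof (rule ext)
  fix us :: "'m list"
  have sA_sgn: "starA (sgn_if k x) = sgn_if k (starA x)" for k x
    by (rule sgn_if_fun) (rule sA_add)
  have lT_sgn: "lT ra T u (sgn_if k x) = sgn_if k (lT ra T u x)" for k x u
    by (rule sgn_if_fun) (rule lT_add)
  have rT_sgn: "rT la T (sgn_if k x) u = sgn_if k (rT la T x u)" for k x u
    by (rule sgn_if_fun) (rule rT_add)
  have sA_neg: "starA (- x) = - starA x" for x
    using sA_sgn[of 1 x] by (simp add: sgn_if_def)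
  have sA_diff: "starA (x - y) = starA x - starA y" for x y
    by (simp only: diff_conv_add_uminus sA_add sA_neg)
  have lT_neg: "lT ra T u (- x) = - lT ra T u x" for u x
    using lT_sgn[of u 1 x] by (simp add: sgn_if_def)
  have rT_neg: "rT la T (- x) u = - rT la T x u" for u x
    using rT_sgn[of 1 x u] by (simp add: sgn_if_def)
  have sA_sum: "starA (sum g A) = (\<Sum>i\<in>A. starA (g i))" for g and A :: "nat set"
  proof -
    interpret additive starA by (rule additive.intro) (rule sA_add)
    show ?thesis by (rule sum)
  qed
  show "S_op starA starM (Suc n) (dT la ra T n f) us = dT la ra T n (S_op starA starM n f) us"
  proof (cases "length us = Suc n")
    case False
    then show ?thesis by (simp add: S_op_def dT_def)
  next
    case len: True
    show ?thesis
    proof (cases n)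
      case 0
      then obtain u where us: "us = [u]" using len by (cases us) auto
      show ?thesis using 0 us
        by (simp add: S_op_def dT_def sA_diff sA_neg lconj rconj sM_inv lT_neg rT_neg sgn_if_def)
    next
      case (Suc m)
      define vs where "vs = rev (map starM us)"
      define Sf where "Sf = S_op starA starM n f"
      define e0 where "e0 = (n - 1) * (n - 2) div 2"
      define e1 where "e1 = (Suc n - 1) * (Suc n - 2) div 2"
      have lvs: "length vs = Suc n" using len by (simp add: vs_def)
      have Sfx: "starA (f (rev (map starM xs))) = sgn_if e0 (Sf xs)" if "length xs = n" for xs
        using that Suc by (simp add: Sf_def S_op_def e0_def sgn_if_sgn_if sgn_if_double)
      have vs0: "vs ! 0 = starM (us ! n)" using len by (simp add: vs_def rev_nth)
      have vsn: "vs ! n = starM (us ! 0)" using len by (simp add: vs_def rev_nth)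
      have tlvs: "tl vs = rev (map starM (take n us))"
      proof -
        have "tl vs = drop 1 vs" by (simp add: drop_Suc)
        also have "\<dots> = rev (take n (map starM us))" using len by (simp add: vs_def drop_rev)
        finally show ?thesis by (simp add: take_map)
      qed
      have tkvs: "take n vs = rev (map starM (tl us))"
        using len by (simp add: vs_def take_rev drop_Suc map_tl)
      have mvs: "merge_at la ra T i vs = rev (map starM (merge_at la ra T (Suc n - i) us))"
        if "i \<in> {1..n}" for i
        using merge_rev[OF len _ _ cconj] that by (simp add: vs_def)
      have lmerge: "length (merge_at la ra T j us) = n" if "j \<in> {1..n}" for j
        using that len by (auto simp add: merge_at_def min_def)
      define Lt where "Lt = lT ra T (us ! 0) (Sf (tl us))"
      define Rt where "Rt = rT la T (Sf (take n us)) (us ! n)"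
      define X where "X j = Sf (merge_at la ra T j us)" for j
      have L1: "S_op starA starM (Suc n) (dT la ra T n f) us = sgn_if e1 (starA (dT la ra T n f vs))"
        using len by (simp add: S_op_def e1_def vs_def)
      have L2: "dT la ra T n f vs = sgn_if n (lT ra T (vs ! 0) (f (tl vs))
          + (\<Sum>i = 1..n. sgn_if i (f (merge_at la ra T i vs)))
          + sgn_if (n + 1) (rT la T (f (take n vs)) (vs ! n)))"
        using lvs Suc by (simp add: dT_def)
      have L3: "starA (dT la ra T n f vs) = sgn_if n (sgn_if e0 Rt
          + (\<Sum>i = 1..n. sgn_if i (sgn_if e0 (X (Suc n - i))))
          + sgn_if (n + 1) (sgn_if e0 Lt))"
      proof -
        have a: "starA (lT ra T (vs ! 0) (f (tl vs))) = sgn_if e0 Rt"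
          using Sfx[of "take n us"] len by (simp add: lconj vs0 tlvs sM_inv Rt_def rT_sgn)
        have b: "starA (rT la T (f (take n vs)) (vs ! n)) = sgn_if e0 Lt"
          using Sfx[of "tl us"] len by (simp add: rconj vsn tkvs sM_inv Lt_def lT_sgn)
        have c: "starA (\<Sum>i = 1..n. sgn_if i (f (merge_at la ra T i vs)))
            = (\<Sum>i = 1..n. sgn_if i (sgn_if e0 (X (Suc n - i))))"
          unfolding sA_sum
        proof (rule sum.cong)
          fix i assume i: "i \<in> {1..n}"
          then have "Suc n - i \<in> {1..n}" by auto
          then show "starA (sgn_if i (f (merge_at la ra T i vs))) = sgn_if i (sgn_if e0 (X (Suc n - i)))"
            using i mvs Sfx lmerge by (simp add: sA_sgn X_def)
        qed simp
        show ?thesis unfolding L2 sA_sgn sA_add a b c ..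
      qed
      have L4: "(\<Sum>i = 1..n. sgn_if i (sgn_if e0 (X (Suc n - i)))) = sgn_if (Suc n + e0) (\<Sum>j = 1..n. sgn_if j (X j))"
      proof -
        have "(\<Sum>i = 1..n. sgn_if i (sgn_if e0 (X (Suc n - i)))) = (\<Sum>i = 1..n. sgn_if (n + 1 - i) (sgn_if e0 (X (Suc n - (n + 1 - i)))))"
          by (rule sum.atLeastAtMost_rev)
        also have "\<dots> = (\<Sum>j = 1..n. sgn_if (Suc n + e0) (sgn_if j (X j)))"
        proof (rule sum.cong)
          fix j assume j: "j \<in> {1..n}"
          then have "even (n + 1 - j) = even (Suc n + j)" by auto
          then show "sgn_if (n + 1 - j) (sgn_if e0 (X (Suc n - (n + 1 - j)))) = sgn_if (Suc n + e0) (sgn_if j (X j))"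
            using j by (auto simp: sgn_if_def)
        qed simp
        finally show ?thesis by (simp add: sgn_if_sum)
      qed
      have R: "dT la ra T n Sf us = sgn_if n (Lt + (\<Sum>j = 1..n. sgn_if j (X j)) + sgn_if (n + 1) Rt)"
        using len Suc by (simp add: dT_def Lt_def Rt_def X_def)
      have par: "even (e1 + e0 + n + 1)"
      proof -
        have e1: "e1 = Suc m * m div 2" using Suc by (simp add: e1_def)
        have e0: "e0 = m * (m - 1) div 2" using Suc by (simp add: e0_def)
        have key: "Suc m * m div 2 = m * (m - 1) div 2 + m"
        proof (cases m)
          case (Suc k)
          have "Suc (Suc k) * Suc k = Suc k * k + 2 * Suc k" by simp
          then have "Suc (Suc k) * Suc k div 2 = Suc k * k div 2 + Suc k" by simp
          then show ?thesis using Suc by simp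
        qed simp
        show ?thesis using e1 e0 key Suc by (simp only: e1 e0 key Suc) presburger
      qed
      show ?thesis
        unfolding L1 L3 L4 R[unfolded Sf_def]
        using par by (auto simp: sgn_if_def algebra_simps)
    qed
  qed
qed



context
  fixes sA :: "'k::field_char_0 \<Rightarrow> 'a::ring \<Rightarrow> 'a"
    and sM :: "'k \<Rightarrow> 'm::ab_group_add \<Rightarrow> 'm"
    and la :: "'a \<Rightarrow> 'm \<Rightarrow> 'm" and ra :: "'m \<Rightarrow> 'a \<Rightarrow> 'm"
    and starA :: "'a \<Rightarrow> 'a" and starM :: "'m \<Rightarrow> 'm"
    and T :: "'m \<Rightarrow> 'a"
  assumes AA: "inv_assoc_algebra sA starA"
    and BM: "inv_bimodule sA sM la ra starA starM"
    and RB: "rel_RB sA sM la ra starA starM T"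
begin

lemma msA: "module sA"
proof -
  have "vector_space sA" using AA unfolding inv_assoc_algebra_def by blast
  then show ?thesis by (simp add: module_iff_vector_space)
qed
lemma msM: "module sM"
proof -
  have "vector_space sM" using BM unfolding inv_bimodule_def by blast
  then show ?thesis by (simp add: module_iff_vector_space)
qed
lemma hA: "module_hom sA sA starA"
proof -
  have "Vector_Spaces.linear sA sA starA" using AA unfolding inv_assoc_algebra_def by blast
  then show ?thesis by (simp add: module_hom_iff_linear)
qed
lemma hM: "module_hom sM sM starM"
proof -
  have "Vector_Spaces.linear sM sM starM" using BM unfolding inv_bimodule_def by blast
  then show ?thesis by (simp add: module_hom_iff_linear)
qed
lemma hT: "module_hom sM sA T"
proof -
  have "Vector_Spaces.linear sM sA T" using RB unfolding rel_RB_def by blast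
  then show ?thesis by (simp add: module_hom_iff_linear)
qed

lemma sA_add: "starA (x + y) = starA x + starA y" using module_hom.add[OF hA] .
lemma sA_neg: "starA (- x) = - starA x" using module_hom.neg[OF hA] .
lemma sA_diff: "starA (x - y) = starA x - starA y" using module_hom.diff[OF hA] .
lemma sA_scale: "starA (sA c x) = sA c (starA x)" using module_hom.scale[OF hA] .
lemma sA_zero: "starA 0 = 0" using module_hom.zero[OF hA] .
lemma sM_add: "starM (x + y) = starM x + starM y" using module_hom.add[OF hM] .
lemma sM_scale: "starM (sM c x) = sM c (starM x)" using module_hom.scale[OF hM] .
lemma T_add: "T (x + y) = T x + T y" using module_hom.add[OF hT] .
lemma T_diff: "T (x - y) = T x - T y" using module_hom.diff[OF hT] .
lemma T_zero: "T 0 = 0" using module_hom.zero[OF hT] .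
lemma sA_inv: "starA (starA x) = x" using AA unfolding inv_assoc_algebra_def by blast
lemma sA_mult: "starA (x * y) = starA y * starA x" using AA unfolding inv_assoc_algebra_def by blast
lemma sM_inv: "starM (starM u) = u" using BM unfolding inv_bimodule_def by blast
lemma la_conj: "starM (la a u) = ra (starM u) (starA a)" using BM unfolding inv_bimodule_def by blast
lemma ra_conj: "starM (ra u a) = la (starA a) (starM u)" using BM unfolding inv_bimodule_def by blast
lemma la_add1: "la (a + b) u = la a u + la b u" using BM[unfolded inv_bimodule_def] by simp
lemma ra_add2: "ra u (a + b) = ra u a + ra u b" using BM[unfolded inv_bimodule_def] by simp
lemma T_conj: "T (starM u) = starA (T u)" using RB unfolding rel_RB_def by blast

lemma lconj: "starA (lT ra T u a) = rT la T (starA a) (starM u)"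
  by (simp add: lT_def rT_def sA_diff sA_mult T_conj[symmetric] ra_conj)
lemma rconj: "starA (rT la T a u) = lT ra T (starM u) (starA a)"
  by (simp add: lT_def rT_def sA_diff sA_mult T_conj[symmetric] la_conj)
lemma cconj: "starM (circT la ra T u v) = circT la ra T (starM v) (starM u)"
  by (simp add: circT_def sM_add la_conj ra_conj T_conj add.commute)
lemma lT_add: "lT ra T u (a + b) = lT ra T u a + lT ra T u b"
  by (simp add: lT_def ra_add2 T_add algebra_simps)
lemma rT_add: "rT la T (a + b) u = rT la T a u + rT la T b u"
  by (simp add: rT_def la_add1 T_add algebra_simps)
lemma lT_zero: "lT ra T u 0 = 0"
  using lT_add[of u 0 0] by simp
lemma rT_zero: "rT la T 0 u = 0"
  using rT_add[of 0 0 u] by simp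

lemma compat': "S_op starA starM (Suc n) (dT la ra T n f) = dT la ra T n (S_op starA starM n f)"
  by (rule compat[OF sA_add sM_inv lconj rconj cconj lT_add rT_add])

lemma dT_add: "dT la ra T n (fadd f g) = fadd (dT la ra T n f) (dT la ra T n g)"
  by (rule ext) (auto simp: dT_def fadd_def lT_add rT_add sgn_if_add sum.distrib algebra_simps)

lemma sgn_if_zero: "sgn_if k (0::'b::ring) = 0" by (simp add: sgn_if_def)

lemma dT_zero: "dT la ra T n (\<lambda>_. 0) = (\<lambda>_. 0)"
  by (rule ext) (auto simp: dT_def lT_zero rT_zero sgn_if_zero)

lemma dT_neg: "dT la ra T n (\<lambda>us. - f us) = (\<lambda>us. - dT la ra T n f us)"
proof -
  have "fadd (dT la ra T n f) (dT la ra T n (\<lambda>us. - f us)) = (\<lambda>_. 0)"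
    using dT_add[of n f "\<lambda>us. - f us"] dT_zero[of n] by (simp add: fadd_def)
  then show ?thesis by (auto simp: fadd_def fun_eq_iff add_eq_0_iff)
qed

lemma S_add: "S_op starA starM n (fadd f g) = fadd (S_op starA starM n f) (S_op starA starM n g)"
  by (rule ext) (auto simp: S_op_def fadd_def sA_add sgn_if_add)

lemma S_neg: "S_op starA starM n (\<lambda>us. - f us) = (\<lambda>us. - S_op starA starM n f us)"
  by (rule ext) (auto simp: S_op_def sA_neg sgn_if_def)

lemma S_zero: "S_op starA starM n (\<lambda>_. 0) = (\<lambda>_. 0)"
  by (rule ext) (auto simp: S_op_def sA_zero sgn_if_def)

lemma S_scale: "S_op starA starM n (fscale sA c f) = fscale sA c (S_op starA starM n f)"
  by (rule ext) (auto simp: S_op_def fscale_def sA_scale sgn_if_def module.scale_minus_right[OF msA] module.scale_zero_right[OF msA])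

lemma rev_map_inv: "rev (map starM (rev (map starM us))) = us"
  by (simp add: rev_map[symmetric] comp_def sM_inv)
lemma sA_sgn: "starA (sgn_if k x) = sgn_if k (starA x)"
  by (rule sgn_if_fun) (rule sA_add)

lemma S_inv: assumes "f \<in> cochains sA sM n" shows "S_op starA starM n (S_op starA starM n f) = f"
proof (rule ext)
  fix us
  have z: "length us \<noteq> n \<Longrightarrow> f us = 0" using assms unfolding cochains_def multilin_def by blast
  show "S_op starA starM n (S_op starA starM n f) us = f us"
    using z by (cases "n = 0") (auto simp: S_op_def sA_neg sA_inv sA_sgn rev_map_inv sgn_if_def)
qed


lemma vsA: "vector_space sA" using AA unfolding inv_assoc_algebra_def by blast

lemma half_twice: "sA (1/2) x + sA (1/2) x = x"
proof -
  have "sA (1/2) x + sA (1/2) x = sA (1/2 + 1/2) x" by (rule module.scale_left_distrib[OF msA, symmetric])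
  also have "(1/2 + 1/2 :: 'k) = 1" by simp
  finally show ?thesis by (simp add: module.scale_one[OF msA])
qed

lemma dbl_zero: "x + x = (0::'a) \<Longrightarrow> x = 0"
proof -
  assume "x + x = 0"
  then have "sA (1/2) (x + x) = 0" by (simp add: module.scale_zero_right[OF msA])
  then show "x = 0" using half_twice[of x] by (simp add: module.scale_right_distrib[OF msA])
qed

lemma coch_zero: "(\<lambda>_. 0) \<in> cochains sA sM n"
  unfolding cochains_def multilin_def by (simp add: module.scale_zero_right[OF msA])

lemma coch_add: "f \<in> cochains sA sM n \<Longrightarrow> g \<in> cochains sA sM n \<Longrightarrow> fadd f g \<in> cochains sA sM n"
  unfolding cochains_def multilin_def fadd_def
  by (auto simp: module.scale_right_distrib[OF msA] algebra_simps)

lemma coch_scale: "f \<in> cochains sA sM n \<Longrightarrow> fscale sA c f \<in> cochains sA sM n"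
  unfolding cochains_def multilin_def fscale_def
  by (auto simp: module.scale_right_distrib[OF msA] module.scale_left_commute[OF msA]
      module.scale_zero_right[OF msA])

lemma coch_neg: "f \<in> cochains sA sM n \<Longrightarrow> (\<lambda>us. - f us) \<in> cochains sA sM n"
  unfolding cochains_def multilin_def
  by (auto simp: module.scale_minus_right[OF msA])

lemma sgn_if_scale: "sgn_if k (sA c x) = sA c (sgn_if k x)"
  by (simp add: sgn_if_def module.scale_minus_right[OF msA])

lemma coch_S: assumes f: "f \<in> cochains sA sM n" shows "S_op starA starM n f \<in> cochains sA sM n"
proof -
  have fm: "f (us[i := u + v]) = f (us[i := u]) + f (us[i := v]) \<and> f (us[i := sM c u]) = sA c (f (us[i := u]))"
    if "length us = n" "i < n" for us i u v c
    using f that unfolding cochains_def multilin_def by blast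
  show ?thesis unfolding cochains_def multilin_def
  proof (intro CollectI conjI allI impI)
    fix us :: "'m list" assume "length us \<noteq> n"
    then show "S_op starA starM n f us = 0" by (simp add: S_op_def)
  next
    fix us :: "'m list" and i u v c assume a: "length us = n \<and> i < n"
    let ?vs = "rev (map starM us)"
    let ?j = "n - i - 1"
    have r: "rev (map starM (us[i := w])) = ?vs[?j := starM w]" for w
      using a by (simp add: map_update rev_update)
    have lv: "length ?vs = n" "?j < n" using a by auto
    have n0: "n \<noteq> 0" using a by auto
    have l2: "length (us[i := w]) = n" for w using a by simp
    show "S_op starA starM n f (us[i := u + v]) = S_op starA starM n f (us[i := u]) + S_op starA starM n f (us[i := v])"
      unfolding S_op_def using n0 l2 r fm[OF lv] by (simp add: sM_add sA_add sgn_if_add)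
    show "S_op starA starM n f (us[i := sM c u]) = sA c (S_op starA starM n f (us[i := u]))"
      unfolding S_op_def using n0 l2 r fm[OF lv] by (simp add: sM_scale sA_scale sgn_if_scale)
  qed
qed


abbreviation "SS n \<equiv> S_op starA starM n"
abbreviation "dd n \<equiv> dT la ra T n"
abbreviation "PP n f \<equiv> fscale sA (1/2) (fadd f (S_op starA starM n f))"
abbreviation "QQ n f \<equiv> fscale sA (1/2) (fadd f (\<lambda>us. - S_op starA starM n f us))"

lemma P_coch: "f \<in> cochains sA sM n \<Longrightarrow> PP n f \<in> cochains sA sM n"
  by (intro coch_scale coch_add coch_S)
lemma Q_coch: "f \<in> cochains sA sM n \<Longrightarrow> QQ n f \<in> cochains sA sM n"
  by (intro coch_scale coch_add coch_S coch_neg)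
lemma P_S: "f \<in> cochains sA sM n \<Longrightarrow> SS n (PP n f) = PP n f"
  by (simp add: S_scale S_add S_inv) (auto simp: fscale_def fadd_def add.commute)
lemma Q_S: "f \<in> cochains sA sM n \<Longrightarrow> SS n (QQ n f) = (\<lambda>us. - QQ n f us)"
  by (simp add: S_scale S_add S_inv S_neg)
    (auto simp: fscale_def fadd_def module.scale_right_diff_distrib[OF msA])
lemma PQ_sum: "fadd (PP n f) (QQ n f) = f"
proof (rule ext)
  fix us
  have "sA (1/2) (f us + SS n f us) + sA (1/2) (f us + - SS n f us) = sA (1/2) (f us) + sA (1/2) (f us)"
    by (simp add: module.scale_right_distrib[OF msA] module.scale_minus_right[OF msA] module.scale_right_diff_distrib[OF msA])
  then show "fadd (PP n f) (QQ n f) us = f us" by (simp add: fadd_def fscale_def half_twice)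
qed
lemma P_dbl: "fadd (PP n f) (PP n f) = fadd f (SS n f)"
  by (rule ext) (simp add: fadd_def fscale_def half_twice)
lemma Q_dbl: "fadd (QQ n f) (QQ n f) = fadd f (\<lambda>us. - SS n f us)"
  by (rule ext) (simp add: fadd_def fscale_def half_twice)

lemma fadd_dbl_zero: "fadd g g = (\<lambda>_. 0) \<Longrightarrow> g = (\<lambda>_. (0::'a))"
  by (rule ext) (metis fadd_def dbl_zero)

lemma main_n:
  "quot_iso_sum sA
     (cocycles la ra T (cochains sA sM) n) (coboundaries la ra T (cochains sA sM) n)
     (cocycles la ra T (icochains sA sM starA starM) n) (coboundaries la ra T (icochains sA sM starA starM) n)
     (cocycles la ra T (imcochains sA sM starA starM) n) (coboundaries la ra T (imcochains sA sM starA starM) n)"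
proof -
  let ?C = "cochains sA sM" and ?Cp = "icochains sA sM starA starM" and ?Cm = "imcochains sA sM starA starM"
  let ?Z = "cocycles la ra T ?C n" and ?B = "coboundaries la ra T ?C n"
  let ?Z1 = "cocycles la ra T ?Cp n" and ?B1 = "coboundaries la ra T ?Cp n"
  let ?Z2 = "cocycles la ra T ?Cm n" and ?B2 = "coboundaries la ra T ?Cm n"
  have Cp_iff: "f \<in> ?Cp k \<longleftrightarrow> f \<in> ?C k \<and> SS k f = f" for f k by (simp add: icochains_def)
  have Cm_iff: "f \<in> ?Cm k \<longleftrightarrow> f \<in> ?C k \<and> SS k f = (\<lambda>us. - f us)" for f k by (simp add: imcochains_def)
  have Z_iff: "f \<in> cocycles la ra T CC n \<longleftrightarrow> f \<in> CC n \<and> dd n f = (\<lambda>_. 0)" for f CC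
    by (simp add: cocycles_def)
  have B1S: "SS n b = b" if "b \<in> ?B1" for b
  proof (cases n)
    case 0 then show ?thesis using that by (simp add: coboundaries_def S_zero)
  next
    case (Suc k)
    have "b \<in> dd k ` ?Cp k" using that Suc by (simp add: coboundaries_def)
    then obtain g where g: "g \<in> ?Cp k" "b = dd k g" by blast
    then show ?thesis using Suc compat'[of k g] Cp_iff by simp
  qed
  have B2S: "SS n b = (\<lambda>us. - b us)" if "b \<in> ?B2" for b
  proof (cases n)
    case 0 then show ?thesis using that by (simp add: coboundaries_def S_zero)
  next
    case (Suc k)
    have "b \<in> dd k ` ?Cm k" using that Suc by (simp add: coboundaries_def)
    then obtain g where g: "g \<in> ?Cm k" "b = dd k g" by blast
    then show ?thesis using Suc compat'[of k g] Cm_iff dT_neg by simp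
  qed
  have Bgrp: "(\<lambda>_. 0) \<in> ?B1 \<and> (\<forall>x\<in>?B1. \<forall>y\<in>?B1. fadd x y \<in> ?B1) \<and> (\<forall>x\<in>?B1. (\<lambda>us. - x us) \<in> ?B1)
     \<and> (\<lambda>_. 0) \<in> ?B2 \<and> (\<forall>x\<in>?B2. \<forall>y\<in>?B2. fadd x y \<in> ?B2) \<and> (\<forall>x\<in>?B2. (\<lambda>us. - x us) \<in> ?B2)
     \<and> (\<forall>b. b \<in> ?B \<longleftrightarrow> (\<exists>b1\<in>?B1. \<exists>b2\<in>?B2. b = fadd b1 b2))"
  proof (cases n)
    case 0 then show ?thesis by (auto simp: coboundaries_def fadd_def)
  next
    case (Suc k)
    have B: "?B = dd k ` ?C k" "?B1 = dd k ` ?Cp k" "?B2 = dd k ` ?Cm k"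
      using Suc by (simp_all add: coboundaries_def)
    have z1: "(\<lambda>_. 0) \<in> ?Cp k" "(\<lambda>_. 0) \<in> ?Cm k"
      using coch_zero S_zero Cp_iff Cm_iff by auto
    have a1: "fadd x y \<in> ?Cp k" if "x \<in> ?Cp k" "y \<in> ?Cp k" for x y
      using that coch_add S_add Cp_iff by simp
    have a2: "fadd x y \<in> ?Cm k" if "x \<in> ?Cm k" "y \<in> ?Cm k" for x y
      using that coch_add S_add Cm_iff by (simp add: fadd_def)
    have n1: "(\<lambda>us. - x us) \<in> ?Cp k" if "x \<in> ?Cp k" for x
      using that coch_neg S_neg Cp_iff by simp
    have n2: "(\<lambda>us. - x us) \<in> ?Cm k" if "x \<in> ?Cm k" for x
      using that coch_neg S_neg Cm_iff by simp
    have i1: "(\<lambda>_. 0) \<in> dd k ` X" if "(\<lambda>_. 0) \<in> X" for X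
      using that dT_zero[of k] by (metis image_eqI)
    have i2: "\<forall>x\<in>dd k ` X. \<forall>y\<in>dd k ` X. fadd x y \<in> dd k ` X"
      if "\<And>x y. x \<in> X \<Longrightarrow> y \<in> X \<Longrightarrow> fadd x y \<in> X" for X
    proof (intro ballI)
      fix x y assume "x \<in> dd k ` X" "y \<in> dd k ` X"
      then obtain gx gy where "gx \<in> X" "gy \<in> X" "x = dd k gx" "y = dd k gy" by blast
      then have "fadd x y = dd k (fadd gx gy)" "fadd gx gy \<in> X" using that by (simp_all add: dT_add)
      then show "fadd x y \<in> dd k ` X" by blast
    qed
    have i3: "\<forall>x\<in>dd k ` X. (\<lambda>us. - x us) \<in> dd k ` X"
      if "\<And>x. x \<in> X \<Longrightarrow> (\<lambda>us. - x us) \<in> X" for X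
    proof (intro ballI)
      fix x assume "x \<in> dd k ` X"
      then obtain gx where "gx \<in> X" "x = dd k gx" by blast
      then have "(\<lambda>us. - x us) = dd k (\<lambda>us. - gx us)" "(\<lambda>us. - gx us) \<in> X" using that by (simp_all add: dT_neg)
      then show "(\<lambda>us. - x us) \<in> dd k ` X" by blast
    qed
    have h2: "b \<in> dd k ` ?C k \<longleftrightarrow> (\<exists>b1\<in>dd k ` ?Cp k. \<exists>b2\<in>dd k ` ?Cm k. b = fadd b1 b2)" for b
    proof
      assume "b \<in> dd k ` ?C k"
      then obtain g where g: "g \<in> ?C k" "b = dd k g" by blast
      have "PP k g \<in> ?Cp k" using g P_coch P_S Cp_iff by simp
      moreover have "QQ k g \<in> ?Cm k" using g Q_coch Q_S Cm_iff by simp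
      moreover have "b = fadd (dd k (PP k g)) (dd k (QQ k g))"
        using g dT_add[of k "PP k g" "QQ k g"] PQ_sum[where n=k and f=g] by simp
      ultimately show "\<exists>b1\<in>dd k ` ?Cp k. \<exists>b2\<in>dd k ` ?Cm k. b = fadd b1 b2" by blast
    next
      assume "\<exists>b1\<in>dd k ` ?Cp k. \<exists>b2\<in>dd k ` ?Cm k. b = fadd b1 b2"
      then obtain g1 g2 where g: "g1 \<in> ?Cp k" "g2 \<in> ?Cm k" "b = fadd (dd k g1) (dd k g2)" by blast
      then have "b = dd k (fadd g1 g2)" by (simp add: dT_add)
      moreover have "fadd g1 g2 \<in> ?C k" using g coch_add Cp_iff Cm_iff by blast
      ultimately show "b \<in> dd k ` ?C k" by blast
    qed
    show ?thesis unfolding B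
      apply (intro conjI allI)
            apply (rule i1[OF z1(1)])
           apply (rule i2[OF a1], assumption+)
          apply (rule i3[OF n1], assumption)
         apply (rule i1[OF z1(2)])
        apply (rule i2[OF a2], assumption+)
       apply (rule i3[OF n2], assumption)
      apply (rule h2)
      done
  qed
  have H3: "fadd z1 z2 \<in> ?Z" if "z1 \<in> ?Z1" "z2 \<in> ?Z2" for z1 z2
    using that coch_add[of z1 n z2] dT_add[of n z1 z2] unfolding Z_iff Cp_iff Cm_iff
    by (simp add: fadd_def)
  have H4: "\<exists>z1\<in>?Z1. \<exists>z2\<in>?Z2. z = fadd z1 z2" if "z \<in> ?Z" for z
  proof -
    have z: "z \<in> ?C n" "dd n z = (\<lambda>_. 0)" using that Z_iff by auto
    have dS: "dd n (SS n z) = (\<lambda>_. 0)" using compat'[of n z] z S_zero by simp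
    have "fadd (dd n (PP n z)) (dd n (PP n z)) = (\<lambda>_. 0)"
      using dT_add[of n "PP n z" "PP n z"] P_dbl[where n=n and f=z] dT_add[of n z "SS n z"] z dS
      by (simp add: fadd_def)
    then have dP: "dd n (PP n z) = (\<lambda>_. 0)" by (rule fadd_dbl_zero)
    have "fadd (dd n (QQ n z)) (dd n (QQ n z)) = (\<lambda>_. 0)"
      using dT_add[of n "QQ n z" "QQ n z"] Q_dbl[where n=n and f=z] dT_add[of n z "\<lambda>us. - SS n z us"] z dS
        dT_neg[of n "SS n z"]
      by (simp add: fadd_def)
    then have dQ: "dd n (QQ n z) = (\<lambda>_. 0)" by (rule fadd_dbl_zero)
    have "PP n z \<in> ?Z1" using z P_coch P_S dP Z_iff Cp_iff by simp
    moreover have "QQ n z \<in> ?Z2" using z Q_coch Q_S dQ Z_iff Cm_iff by simp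
    moreover have "z = fadd (PP n z) (QQ n z)" using PQ_sum[where n=n and f=z] by simp
    ultimately show ?thesis by blast
  qed
  have H5: "z1 = fadd z1' b1 \<and> z2 = fadd z2' b2"
    if a: "z1\<in>?Z1" "z1'\<in>?Z1" "z2\<in>?Z2" "z2'\<in>?Z2" "b1\<in>?B1" "b2\<in>?B2"
      "fadd z1 z2 = fadd (fadd z1' z2') (fadd b1 b2)" for z1 z1' z2 z2' b1 b2
  proof -
    have S1: "SS n z1 = z1" "SS n z1' = z1'" using a Z_iff Cp_iff by auto
    have S2: "SS n z2 = (\<lambda>us. - z2 us)" "SS n z2' = (\<lambda>us. - z2' us)" using a Z_iff Cm_iff by auto
    have Sb: "SS n b1 = b1" "SS n b2 = (\<lambda>us. - b2 us)" using a B1S B2S by auto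
    have e2: "SS n (fadd z1 z2) = SS n (fadd (fadd z1' z2') (fadd b1 b2))" using a by simp
    then have e2': "fadd z1 (\<lambda>us. - z2 us) = fadd (fadd z1' (\<lambda>us. - z2' us)) (fadd b1 (\<lambda>us. - b2 us))"
      by (simp add: S_add S1 S2 Sb)
    have p: "z1 us = z1' us + b1 us \<and> z2 us = z2' us + b2 us" for us
    proof -
      have u1: "z1 us + z2 us = z1' us + z2' us + (b1 us + b2 us)" using fun_cong[OF a(7), of us] by (simp add: fadd_def)
      have u2: "z1 us - z2 us = z1' us - z2' us + (b1 us - b2 us)" using fun_cong[OF e2', of us] by (simp add: fadd_def)
      have "(z1 us - z1' us - b1 us) + (z1 us - z1' us - b1 us) = 0"
      proof -
        have "(z1 us - z1' us - b1 us) + (z1 us - z1' us - b1 us)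
           = (z1 us + z2 us - (z1' us + z2' us + (b1 us + b2 us))) + (z1 us - z2 us - (z1' us - z2' us + (b1 us - b2 us)))"
          by (simp add: algebra_simps)
        then show ?thesis using u1 u2 by simp
      qed
      then have "z1 us - z1' us - b1 us = 0" by (rule dbl_zero)
      then show ?thesis using u1 by (simp add: algebra_simps)
    qed
    then show ?thesis by (auto simp: fadd_def fun_eq_iff)
  qed
  show ?thesis
  proof (rule quot_abs[OF vsA])
    show "(\<lambda>_. 0) \<in> ?B1" using Bgrp by (elim conjE)
    show "(\<lambda>_. 0) \<in> ?B2" using Bgrp by (elim conjE)
    show "\<forall>x\<in>?B1. \<forall>y\<in>?B1. fadd x y \<in> ?B1" using Bgrp by (elim conjE)
    show "\<forall>x\<in>?B1. (\<lambda>us. - x us) \<in> ?B1" using Bgrp by (elim conjE)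
    show "\<forall>x\<in>?B2. \<forall>y\<in>?B2. fadd x y \<in> ?B2" using Bgrp by (elim conjE)
    show "\<forall>x\<in>?B2. (\<lambda>us. - x us) \<in> ?B2" using Bgrp by (elim conjE)
    show "b \<in> ?B \<longleftrightarrow> (\<exists>b1\<in>?B1. \<exists>b2\<in>?B2. b = fadd b1 b2)" for b
    proof -
      have "\<forall>b. b \<in> ?B \<longleftrightarrow> (\<exists>b1\<in>?B1. \<exists>b2\<in>?B2. b = fadd b1 b2)" using Bgrp by (elim conjE)
      then show ?thesis by (rule spec)
    qed
  qed (fact H3 H4 H5)+
qed

end

theorem mainTheorem5:
  fixes sA :: "'k::field_char_0 \<Rightarrow> 'a::ring \<Rightarrow> 'a"
    and sM :: "'k \<Rightarrow> 'm::ab_group_add \<Rightarrow> 'm"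
    and la :: "'a \<Rightarrow> 'm \<Rightarrow> 'm" and ra :: "'m \<Rightarrow> 'a \<Rightarrow> 'm"
    and starA :: "'a \<Rightarrow> 'a" and starM :: "'m \<Rightarrow> 'm"
    and T :: "'m \<Rightarrow> 'a"
  assumes "inv_assoc_algebra sA starA"
    and "inv_bimodule sA sM la ra starA starM"
    and "rel_RB sA sM la ra starA starM T"
  shows "\<forall>n. quot_iso_sum sA
     (cocycles la ra T (cochains sA sM) n) (coboundaries la ra T (cochains sA sM) n)
     (cocycles la ra T (icochains sA sM starA starM) n) (coboundaries la ra T (icochains sA sM starA starM) n)
     (cocycles la ra T (imcochains sA sM starA starM) n) (coboundaries la ra T (imcochains sA sM starA starM) n)"
  using main_n[OF assms] by blast

end
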